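(* Let $H=\sum_{a\in\mathcal T}\lambda_aQ_a$ be a Hamiltonian on $n$ qubits, with $Q_a$ Pauli strings, $|\lambda_a|\le1$ and $|\mathrm{supp}(Q_a)|\le k$ for all $a$. Fix an ordering $(a_1,\dots,a_M)$ of $\mathcal T$ ($M=|\mathcal T|$), a step size $\delta>0$, and write $G_m:=e^{\delta\lambda_{a_m}Q_{a_m}}$. For integers $p\ge0$ and $0\le j<M$ let $$U_{\mathrm{right}}^{(p,j)}:=(G_1G_2\cdots G_M)^p\,(G_1\cdots G_j),\qquad U_{\mathrm{left}}^{(p,j)}:=(G_j\cdots G_1)\,(G_M\cdots G_1)^p,$$ and $X_{p,j}:=U_{\mathrm{left}}^{(p,j)}U_{\mathrm{right}}^{(p,j)}$. Let $P\ne\mathbb I$ be a Pauli string with support $R$, $w:=|R|$, $r:=\lceil w/k\rceil$, and let $B:=|\{a\in\mathcal T:\mathrm{supp}(Q_a)\cap R\ne\emptyset\}|$. Set $\beta:=(p+1)\delta$. Then $$2^{-n}\,|\operatorname{Tr}(PX_{p,j})|\le\Big(\frac{2e\beta Be^{\delta}}{r}\Big)^{r}e^{2\beta M}.$$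
   Context: $\mathrm{supp}(Q)$ is the set of qubits on which the Pauli string $Q$ acts non-trivially. *)

theory Defs
  imports Complex_Main "Jordan_Normal_Form.Matrix"
begin

datatype pauli = PI | PX | PY | PZ

definition pauli1 :: "pauli \<Rightarrow> nat \<Rightarrow> nat \<Rightarrow> complex" where
  "pauli1 s a b = (case s of
      PI \<Rightarrow> (if a = b then 1 else 0)
    | PX \<Rightarrow> (if a \<noteq> b then 1 else 0)
    | PY \<Rightarrow> (if a = 0 \<and> b = 1 then - \<i> else if a = 1 \<and> b = 0 then \<i> else 0)
    | PZ \<Rightarrow> (if a = b then (if a = 0 then 1 else -1) else 0))"

text \<open>Bit q of basis index i (qubit q of the computational basis state).\<close>
definition bit_of :: "nat \<Rightarrow> nat \<Rightarrow> nat" where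
  "bit_of i q = (i div 2 ^ q) mod 2"

text \<open>Matrix of a Pauli string (tensor product, written entrywise) on 2^n dimensional space.\<close>
definition pauli_mat :: "pauli list \<Rightarrow> complex mat" where
  "pauli_mat P = mat (2 ^ length P) (2 ^ length P)
     (\<lambda>(i, j). \<Prod>q<length P. pauli1 (P ! q) (bit_of i q) (bit_of j q))"

definition supp :: "pauli list \<Rightarrow> nat set" where
  "supp P = {q. q < length P \<and> P ! q \<noteq> PI}"

definition mtrace :: "complex mat \<Rightarrow> complex" where
  "mtrace A = (\<Sum>i<dim_row A. A $$ (i, i))"

definition mexp :: "complex mat \<Rightarrow> complex mat" where
  "mexp A = mat (dim_row A) (dim_col A)
     (\<lambda>(i, j). \<Sum>k. (A ^\<^sub>m k) $$ (i, j) / of_nat (fact k))"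

definition mprod_list :: "nat \<Rightarrow> complex mat list \<Rightarrow> complex mat" where
  "mprod_list d As = foldr (\<lambda>A B. A * B) As (1\<^sub>m d)"

end

theory Submission
  imports Defs
begin

lemma bit_of_low: "l < 2^n \<Longrightarrow> bit_of l n = 0"
  by (simp add: bit_of_def)

lemma bit_of_high: "l < 2^n \<Longrightarrow> bit_of (l + 2^n) n = 1"
  by (simp add: bit_of_def)

lemma bit_of_shift: "q < n \<Longrightarrow> bit_of (l + 2^n) q = bit_of l q"
proof -
  assume q: "q < n"
  have "(2::nat)^n = 2^q * 2^(n-q)" using q by (simp add: power_add[symmetric])
  hence "(l + 2^n) div 2^q = l div 2^q + 2^(n-q)" by simp
  moreover have "even ((2::nat)^(n-q))" using q by simp
  ultimately show ?thesis unfolding bit_of_def by (auto simp: mod2_eq_if)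
qed

lemma bitsum:
  fixes h :: "nat \<Rightarrow> nat \<Rightarrow> 'a::comm_semiring_1"
  shows "(\<Sum>l<2^n. \<Prod>q<n. h q (bit_of l q)) = (\<Prod>q<n. h q 0 + h q 1)"
proof (induction n)
  case 0 then show ?case by simp
next
  case (Suc n)
  have split: "{..<(2::nat)^Suc n} = {..<2^n} \<union> {2^n..<2^n+2^n}" by auto
  have A: "(\<Sum>l<2^n. \<Prod>q<Suc n. h q (bit_of l q)) = (\<Sum>l<2^n. \<Prod>q<n. h q (bit_of l q)) * h n 0"
    by (simp add: sum_distrib_right bit_of_low)
  have "(\<Sum>l\<in>{2^n..<2^n+2^n}. \<Prod>q<Suc n. h q (bit_of l q)) = (\<Sum>l\<in>{0..<2^n}. \<Prod>q<Suc n. h q (bit_of (l+2^n) q))"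
    using sum.shift_bounds_nat_ivl[of "\<lambda>l. \<Prod>q<Suc n. h q (bit_of l q)" 0 "2^n" "2^n"] by simp
  also have "\<dots> = (\<Sum>l<2^n. \<Prod>q<n. h q (bit_of l q)) * h n 1"
    by (auto simp add: sum_distrib_right bit_of_high bit_of_shift atLeast0LessThan intro!: sum.cong prod.cong)
  finally have B: "(\<Sum>l\<in>{2^n..<2^n+2^n}. \<Prod>q<Suc n. h q (bit_of l q)) = (\<Sum>l<2^n. \<Prod>q<n. h q (bit_of l q)) * h n 1" .
  have "(\<Sum>l<2^Suc n. \<Prod>q<Suc n. h q (bit_of l q)) = (\<Sum>l<2^n. \<Prod>q<Suc n. h q (bit_of l q)) + (\<Sum>l\<in>{2^n..<2^n+2^n}. \<Prod>q<Suc n. h q (bit_of l q))"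
    unfolding split by (subst sum.union_disjoint) auto
  also have "\<dots> = (\<Prod>q<Suc n. h q 0 + h q 1)" using A B Suc by (simp add: distrib_left)
  finally show ?case .
qed


definition tens :: "nat \<Rightarrow> (nat \<Rightarrow> nat \<Rightarrow> nat \<Rightarrow> complex) \<Rightarrow> complex mat" where
  "tens n f = mat (2^n) (2^n) (\<lambda>(i,j). \<Prod>q<n. f q (bit_of i q) (bit_of j q))"

definition comp2 :: "(nat \<Rightarrow> nat \<Rightarrow> complex) \<Rightarrow> (nat \<Rightarrow> nat \<Rightarrow> complex) \<Rightarrow> nat \<Rightarrow> nat \<Rightarrow> complex" where
  "comp2 f g a b = (\<Sum>l<2. f a l * g l b)"

definition id2 :: "nat \<Rightarrow> nat \<Rightarrow> complex" where
  "id2 a b = (if a = b then 1 else 0)"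

lemma tens_carrier[simp]: "tens n f \<in> carrier_mat (2^n) (2^n)"
  by (simp add: tens_def)

lemma tens_dim[simp]: "dim_row (tens n f) = 2^n" "dim_col (tens n f) = 2^n"
  by (simp_all add: tens_def)

lemma tens_index: "i < 2^n \<Longrightarrow> j < 2^n \<Longrightarrow> tens n f $$ (i,j) = (\<Prod>q<n. f q (bit_of i q) (bit_of j q))"
  by (simp add: tens_def)

lemma tens_mult: "tens n f * tens n g = tens n (\<lambda>q. comp2 (f q) (g q))"
proof (rule eq_matI)
  fix i j assume i: "i < dim_row (tens n (\<lambda>q. comp2 (f q) (g q)))" and j: "j < dim_col (tens n (\<lambda>q. comp2 (f q) (g q)))"
  hence i': "i < 2^n" and j': "j < 2^n" by auto
  have "(tens n f * tens n g) $$ (i,j) = (\<Sum>l\<in>{0..<2^n}. tens n f $$ (i,l) * tens n g $$ (l,j))"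
    using i' j' by (simp add: scalar_prod_def)
  also have "\<dots> = (\<Sum>l<2^n. \<Prod>q<n. f q (bit_of i q) (bit_of l q) * g q (bit_of l q) (bit_of j q))"
    using i' j' by (auto simp: tens_index prod.distrib atLeast0LessThan intro!: sum.cong)
  also have "\<dots> = (\<Prod>q<n. f q (bit_of i q) 0 * g q 0 (bit_of j q) + f q (bit_of i q) 1 * g q 1 (bit_of j q))"
    by (rule bitsum[where h = "\<lambda>q b. f q (bit_of i q) b * g q b (bit_of j q)"])
  also have "\<dots> = tens n (\<lambda>q. comp2 (f q) (g q)) $$ (i,j)"
    using i' j' by (simp add: tens_index comp2_def numeral_2_eq_2)
  finally show "(tens n f * tens n g) $$ (i,j) = tens n (\<lambda>q. comp2 (f q) (g q)) $$ (i,j)" .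
qed auto

lemma mtrace_tens: "mtrace (tens n f) = (\<Prod>q<n. f q 0 0 + f q 1 1)"
proof -
  have "mtrace (tens n f) = (\<Sum>l<2^n. \<Prod>q<n. f q (bit_of l q) (bit_of l q))"
    unfolding mtrace_def by (auto simp: tens_index intro!: sum.cong)
  also have "\<dots> = (\<Prod>q<n. f q 0 0 + f q 1 1)"
    by (rule bitsum[where h = "\<lambda>q b. f q b b"])
  finally show ?thesis .
qed

lemma bits_eq: "i < 2^n \<Longrightarrow> j < 2^n \<Longrightarrow> (\<forall>q<n. bit_of i q = bit_of j q) \<Longrightarrow> i = j"
proof (induction n arbitrary: i j)
  case 0 then show ?case by simp
next
  case (Suc n)
  have h0: "i mod 2 = j mod 2" using Suc.prems(3)[rule_format, of 0] by (simp add: bit_of_def)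
  have "\<forall>q<n. bit_of (i div 2) q = bit_of (j div 2) q"
  proof (intro allI impI)
    fix q assume "q < n"
    hence "bit_of i (Suc q) = bit_of j (Suc q)" using Suc.prems(3) by simp
    thus "bit_of (i div 2) q = bit_of (j div 2) q" by (simp add: bit_of_def div_mult2_eq)
  qed
  moreover have "i div 2 < 2^n" "j div 2 < 2^n" using Suc.prems by auto
  ultimately have "i div 2 = j div 2" using Suc.IH by blast
  with h0 show ?case by (metis div_mult_mod_eq)
qed

lemma one_tens: "1\<^sub>m (2^n) = tens n (\<lambda>q. id2)"
proof (rule eq_matI)
  fix i j assume "i < dim_row (tens n (\<lambda>q. id2))" "j < dim_col (tens n (\<lambda>q. id2))"
  hence i: "i < 2^n" and j: "j < 2^n" by auto
  show "1\<^sub>m (2^n) $$ (i,j) = tens n (\<lambda>q. id2) $$ (i,j)"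
  proof (cases "i = j")
    case True then show ?thesis using i by (simp add: tens_index id2_def)
  next
    case False
    then obtain q where q: "q < n" "bit_of i q \<noteq> bit_of j q" using bits_eq[OF i j] by blast
    hence "(\<Prod>q<n. id2 (bit_of i q) (bit_of j q)) = 0"
      by (intro prod_zero) (auto simp: id2_def)
    then show ?thesis using i j False by (simp add: tens_index)
  qed
qed auto

lemma pauli_tens: "pauli_mat P = tens (length P) (\<lambda>q. pauli1 (P!q))"
  by (simp add: pauli_mat_def tens_def)


lemma tens_cong: "(\<And>q a b. q < n \<Longrightarrow> a < 2 \<Longrightarrow> b < 2 \<Longrightarrow> f q a b = g q a b) \<Longrightarrow> tens n f = tens n g"
  unfolding tens_def by (intro eq_matI) (auto simp: bit_of_def intro!: prod.cong)

lemma less2: "(a::nat) < 2 \<longleftrightarrow> a = 0 \<or> a = 1" by auto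

lemma pauli_sq: "a < 2 \<Longrightarrow> b < 2 \<Longrightarrow> comp2 (pauli1 s) (pauli1 s) a b = id2 a b"
  by (cases s) (auto simp: comp2_def pauli1_def id2_def less2 numeral_2_eq_2)

lemma pauli_mat_sq: "pauli_mat P * pauli_mat P = 1\<^sub>m (2 ^ length P)"
  unfolding pauli_tens tens_mult one_tens by (rule tens_cong) (simp add: pauli_sq)

lemma pauli_mat_carrier[simp]: "pauli_mat P \<in> carrier_mat (2 ^ length P) (2 ^ length P)"
  by (simp add: pauli_mat_def)

lemma comp2_id_left: "a < 2 \<Longrightarrow> comp2 id2 g a b = g a b"
  by (subst (asm) less2) (elim disjE; simp add: comp2_def id2_def numeral_2_eq_2)

lemma comp2_id_right: "b < 2 \<Longrightarrow> comp2 f id2 a b = f a b"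
  by (subst (asm) less2) (elim disjE; simp add: comp2_def id2_def numeral_2_eq_2)

definition rs :: "(nat \<Rightarrow> nat \<Rightarrow> complex) \<Rightarrow> bool" where
  "rs f = (\<forall>a<2. cmod (f a 0) + cmod (f a 1) \<le> 1)"

lemma rs_id2: "rs id2" by (auto simp: rs_def id2_def less2)

lemma rs_pauli: "rs (pauli1 s)" by (cases s) (auto simp: rs_def pauli1_def less2)

lemma rs_comp2: assumes f: "rs f" and g: "rs g" shows "rs (comp2 f g)"
  unfolding rs_def
proof (intro allI impI)
  fix a :: nat assume a: "a < 2"
  have g0: "cmod (g 0 0) + cmod (g 0 1) \<le> 1" and g1: "cmod (g 1 0) + cmod (g 1 1) \<le> 1"
    using g by (auto simp: rs_def)
  have fa: "cmod (f a 0) + cmod (f a 1) \<le> 1" using f a by (auto simp: rs_def)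
  have "cmod (comp2 f g a 0) + cmod (comp2 f g a 1)
     \<le> (cmod (f a 0) * cmod (g 0 0) + cmod (f a 1) * cmod (g 1 0)) + (cmod (f a 0) * cmod (g 0 1) + cmod (f a 1) * cmod (g 1 1))"
    unfolding comp2_def numeral_2_eq_2
    by (intro add_mono) (simp_all add: norm_mult[symmetric] norm_triangle_ineq)
  also have "\<dots> = cmod (f a 0) * (cmod (g 0 0) + cmod (g 0 1)) + cmod (f a 1) * (cmod (g 1 0) + cmod (g 1 1))"
    by (simp add: algebra_simps)
  also have "\<dots> \<le> cmod (f a 0) * 1 + cmod (f a 1) * 1"
    by (intro add_mono mult_left_mono g0 g1) auto
  finally show "cmod (comp2 f g a 0) + cmod (comp2 f g a 1) \<le> 1" using fa by simp
qed

lemma rs_trace: "rs h \<Longrightarrow> cmod (h 0 0 + h 1 1) \<le> 2"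
proof -
  assume h: "rs h"
  have a: "cmod (h 0 0) + cmod (h 0 1) \<le> 1" using h unfolding rs_def by simp
  have b: "cmod (h 1 0) + cmod (h 1 1) \<le> 1" using h unfolding rs_def by simp
  have "cmod (h 0 0) \<le> 1" using a norm_ge_zero[of "h 0 1"] by linarith
  moreover have "cmod (h 1 1) \<le> 1" using b norm_ge_zero[of "h 1 0"] by linarith
  ultimately show ?thesis using norm_triangle_ineq[of "h 0 0" "h 1 1"] by linarith
qed

lemma pauli_traceless: "s \<noteq> PI \<Longrightarrow> pauli1 s 0 0 + pauli1 s 1 1 = 0"
  by (cases s) (auto simp: pauli1_def)


lemma smult_smult_m: "a \<cdot>\<^sub>m (b \<cdot>\<^sub>m M) = (a * b) \<cdot>\<^sub>m (M :: complex mat)"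
  by (intro eq_matI) auto

lemma smult_pow: fixes c :: complex assumes A: "A \<in> carrier_mat d d"
  shows "(c \<cdot>\<^sub>m A) ^\<^sub>m k = (c ^ k) \<cdot>\<^sub>m (A ^\<^sub>m k)"
proof (induction k)
  case 0 then show ?case by (intro eq_matI) auto
next
  case (Suc k)
  have "(c \<cdot>\<^sub>m A) ^\<^sub>m Suc k = ((c ^ k) \<cdot>\<^sub>m (A ^\<^sub>m k)) * (c \<cdot>\<^sub>m A)" using Suc by simp
  also have "\<dots> = (c ^ k) \<cdot>\<^sub>m (A ^\<^sub>m k * (c \<cdot>\<^sub>m A))"
    using A by (intro mult_smult_assoc_mat[of _ d d]) auto
  also have "\<dots> = (c ^ k) \<cdot>\<^sub>m (c \<cdot>\<^sub>m (A ^\<^sub>m k * A))"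
    using A by (subst mult_smult_distrib[of _ d d]) auto
  also have "\<dots> = (c ^ k * c) \<cdot>\<^sub>m (A ^\<^sub>m k * A)"
    by (simp add: smult_smult_m)
  finally show ?case by (simp add: mult.commute)
qed

lemma invol_pow: assumes A: "A \<in> carrier_mat d d" and AA: "A * A = 1\<^sub>m d"
  shows "A ^\<^sub>m k = (if even k then 1\<^sub>m d else A)"
proof (induction k)
  case 0 then show ?case using A by simp
next
  case (Suc k)
  then show ?case using A AA by auto
qed

lemma mexp_invol: assumes A: "A \<in> carrier_mat d d" and AA: "A * A = 1\<^sub>m d"
  shows "mexp (complex_of_real x \<cdot>\<^sub>m A) = complex_of_real (cosh x) \<cdot>\<^sub>m 1\<^sub>m d + complex_of_real (sinh x) \<cdot>\<^sub>m A"
proof (rule eq_matI)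
  fix i j assume "i < dim_row (complex_of_real (cosh x) \<cdot>\<^sub>m 1\<^sub>m d + complex_of_real (sinh x) \<cdot>\<^sub>m A)"
    "j < dim_col (complex_of_real (cosh x) \<cdot>\<^sub>m 1\<^sub>m d + complex_of_real (sinh x) \<cdot>\<^sub>m A)"
  hence i: "i < d" and j: "j < d" using A by auto
  define u :: complex where "u = (if i = j then 1 else 0)"
  have trm: "((complex_of_real x \<cdot>\<^sub>m A) ^\<^sub>m k) $$ (i,j) / of_nat (fact k)
     = complex_of_real (if even k then x ^ k /\<^sub>R fact k else 0) * u + complex_of_real (if even k then 0 else x ^ k /\<^sub>R fact k) * A $$ (i,j)" for k
    using i j A by (auto simp add: smult_pow[OF A] invol_pow[OF A AA] u_def of_real_divide field_simps)
  have s1: "(\<lambda>k. complex_of_real (if even k then x ^ k /\<^sub>R fact k else 0) * u) sums (complex_of_real (cosh x) * u)"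
    by (intro sums_mult2 sums_of_real cosh_converges)
  have s2: "(\<lambda>k. complex_of_real (if even k then 0 else x ^ k /\<^sub>R fact k) * A $$ (i,j)) sums (complex_of_real (sinh x) * A $$ (i,j))"
    by (intro sums_mult2 sums_of_real sinh_converges)
  have "(\<lambda>k. ((complex_of_real x \<cdot>\<^sub>m A) ^\<^sub>m k) $$ (i,j) / of_nat (fact k)) sums
        (complex_of_real (cosh x) * u + complex_of_real (sinh x) * A $$ (i,j))"
    unfolding trm by (rule sums_add[OF s1 s2])
  hence "(\<Sum>k. ((complex_of_real x \<cdot>\<^sub>m A) ^\<^sub>m k) $$ (i,j) / of_nat (fact k)) = complex_of_real (cosh x) * u + complex_of_real (sinh x) * A $$ (i,j)"
    by (rule sums_unique[symmetric])
  then show "mexp (complex_of_real x \<cdot>\<^sub>m A) $$ (i,j) = (complex_of_real (cosh x) \<cdot>\<^sub>m 1\<^sub>m d + complex_of_real (sinh x) \<cdot>\<^sub>m A) $$ (i,j)"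
    using i j A by (simp add: mexp_def u_def)
qed (use A in \<open>auto simp: mexp_def\<close>)

lemma trace_bound: assumes "length P = n" "\<forall>q<n. rs (g q)"
  shows "cmod (mtrace (pauli_mat P * tens n g)) \<le> 2^n"
proof -
  have "cmod (mtrace (pauli_mat P * tens n g)) = (\<Prod>q<n. cmod (comp2 (pauli1 (P!q)) (g q) 0 0 + comp2 (pauli1 (P!q)) (g q) 1 1))"
    using assms(1) by (simp add: pauli_tens tens_mult mtrace_tens prod_norm)
  also have "\<dots> \<le> (\<Prod>q<n. 2)"
    by (intro prod_mono conjI norm_ge_zero rs_trace rs_comp2 rs_pauli) (use assms(2) in auto)
  finally show ?thesis by simp
qed

lemma trace_zero: assumes "length P = n" "q < n" "P!q \<noteq> PI" "\<forall>a<2. \<forall>b<2. g q a b = id2 a b"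
  shows "mtrace (pauli_mat P * tens n g) = 0"
proof -
  have "comp2 (pauli1 (P!q)) (g q) a b = comp2 (pauli1 (P!q)) id2 a b" if "b < 2" for a b
    unfolding comp2_def using assms(4) that by (intro sum.cong) auto
  hence "comp2 (pauli1 (P!q)) (g q) 0 0 + comp2 (pauli1 (P!q)) (g q) 1 1 = 0"
    using pauli_traceless[OF assms(3)] by (simp add: comp2_id_right)
  thus ?thesis using assms(1,2) by (simp add: pauli_tens tens_mult mtrace_tens) (metis lessThan_iff)
qed


fun bnd :: "(real \<times> real \<times> bool) list \<Rightarrow> nat \<Rightarrow> real" where
  "bnd [] m = (if m = 0 then 1 else 0)"
| "bnd ((c,s,t)#fs) m = c * bnd fs m + s * bnd fs (if t then m - 1 else m)"

definition fm :: "nat \<Rightarrow> real \<times> real \<times> pauli list \<Rightarrow> complex mat" where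
  "fm n x = (case x of (c,s,Qm) \<Rightarrow> complex_of_real c \<cdot>\<^sub>m 1\<^sub>m (2^n) + complex_of_real s \<cdot>\<^sub>m pauli_mat Qm)"

definition bl :: "nat set \<Rightarrow> real \<times> real \<times> pauli list \<Rightarrow> real \<times> real \<times> bool" where
  "bl R x = (case x of (c,s,Qm) \<Rightarrow> (\<bar>c\<bar>, \<bar>s\<bar>, supp Qm \<inter> R \<noteq> {}))"

lemma mprod_list_carrier: "(\<And>A. A \<in> set As \<Longrightarrow> A \<in> carrier_mat d d) \<Longrightarrow> mprod_list d As \<in> carrier_mat d d"
proof (induction As)
  case Nil then show ?case by (simp add: mprod_list_def)
next
  case (Cons a As)
  then show ?case unfolding mprod_list_def by (simp del: mult_carrier_mat) (metis mult_carrier_mat list.set_intros mprod_list_def)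
qed

lemma mprod_list_Cons: "mprod_list d (A # As) = A * mprod_list d As"
  by (simp add: mprod_list_def)

lemma mprod_list_Nil: "mprod_list d [] = 1\<^sub>m d"
  by (simp add: mprod_list_def)

lemma mtrace_lin: "X \<in> carrier_mat d d \<Longrightarrow> Y \<in> carrier_mat d d \<Longrightarrow>
   mtrace (c \<cdot>\<^sub>m X + s \<cdot>\<^sub>m Y) = c * mtrace X + s * mtrace Y"
  by (simp add: mtrace_def sum.distrib sum_distrib_left)

lemma key_decomp:
  assumes Pm: "Pm \<in> carrier_mat d d" and T: "T \<in> carrier_mat d d" and Q: "Q \<in> carrier_mat d d"
    and Rr: "Rr \<in> carrier_mat d d"
  shows "mtrace (Pm * (T * ((c \<cdot>\<^sub>m 1\<^sub>m d + s \<cdot>\<^sub>m Q) * Rr)))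
       = c * mtrace (Pm * (T * Rr)) + s * mtrace (Pm * ((T * Q) * Rr))"
proof -
  have "(c \<cdot>\<^sub>m 1\<^sub>m d + s \<cdot>\<^sub>m Q) * Rr = c \<cdot>\<^sub>m Rr + s \<cdot>\<^sub>m (Q * Rr)"
    using Q Rr by (simp add: add_mult_distrib_mat[of _ d d] mult_smult_assoc_mat[of _ d d])
  hence "T * ((c \<cdot>\<^sub>m 1\<^sub>m d + s \<cdot>\<^sub>m Q) * Rr) = c \<cdot>\<^sub>m (T * Rr) + s \<cdot>\<^sub>m ((T * Q) * Rr)"
    using T Q Rr by (simp add: mult_add_distrib_mat[of T d d _ d] mult_smult_distrib[of T d d _ d] assoc_mult_mat[of T d d _ d _ d])
  hence "Pm * (T * ((c \<cdot>\<^sub>m 1\<^sub>m d + s \<cdot>\<^sub>m Q) * Rr)) = c \<cdot>\<^sub>m (Pm * (T * Rr)) + s \<cdot>\<^sub>m (Pm * ((T * Q) * Rr))"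
    using Pm T Q Rr by (simp add: mult_add_distrib_mat[of Pm d d _ d] mult_smult_distrib[of Pm d d _ d])
  thus ?thesis using Pm T Q Rr by (simp add: mtrace_lin[of _ d])
qed

lemma pauli1_PI: "pauli1 PI = id2"
  by (intro ext) (simp add: pauli1_def id2_def)

lemma supp_finite[simp]: "finite (supp Q)"
  by (rule finite_subset[of _ "{..<length Q}"]) (auto simp: supp_def)

lemma main_ind:
  assumes Plen: "length P = n" and kpos: "k \<ge> 1"
  shows "(\<forall>x\<in>set fs. case x of (c,s,Qm) \<Rightarrow> length Qm = n \<and> card (supp Qm) \<le> k) \<Longrightarrow>
    (\<forall>q<n. rs (g q)) \<Longrightarrow> (\<forall>q\<in>supp P - C. \<forall>a<2. \<forall>b<2. g q a b = id2 a b) \<Longrightarrow>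
    m * k < card (supp P - C) + k \<Longrightarrow>
    cmod (mtrace (pauli_mat P * (tens n g * mprod_list (2^n) (map (fm n) fs)))) \<le> 2^n * bnd (map (bl (supp P)) fs) m"
proof (induction fs arbitrary: g C m)
  case Nil
  have T: "tens n g * 1\<^sub>m (2^n) = tens n g" by simp
  show ?case
  proof (cases "m = 0")
    case True
    then show ?thesis using trace_bound[OF Plen Nil(2)] by (simp add: mprod_list_Nil)
  next
    case False
    hence "m * k \<ge> k" by simp
    hence "card (supp P - C) > 0" using Nil(4) by linarith
    then obtain q where q: "q \<in> supp P - C" by (metis card_gt_0_iff ex_in_conv)
    hence "q < n" "P!q \<noteq> PI" using Plen by (auto simp: supp_def)
    hence "mtrace (pauli_mat P * tens n g) = 0" using trace_zero[OF Plen] Nil(3) q by blast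
    then show ?thesis using False by (simp add: mprod_list_Nil)
  qed
next
  case (Cons x fs)
  obtain c s Qm where x: "x = (c,s,Qm)" by (cases x)
  have Qlen: "length Qm = n" and Qk: "card (supp Qm) \<le> k" using Cons(2) x by auto
  have fs: "\<forall>x\<in>set fs. case x of (c,s,Qm) \<Rightarrow> length Qm = n \<and> card (supp Qm) \<le> k" using Cons(2) by auto
  define Rr where "Rr = mprod_list (2^n) (map (fm n) fs)"
  have Rr: "Rr \<in> carrier_mat (2^n) (2^n)" unfolding Rr_def
    by (rule mprod_list_carrier) (use fs in \<open>fastforce simp: fm_def split: prod.splits\<close>)
  define t where "t = (supp Qm \<inter> supp P \<noteq> {})"
  have eq: "mtrace (pauli_mat P * (tens n g * mprod_list (2^n) (map (fm n) (x # fs))))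
    = complex_of_real c * mtrace (pauli_mat P * (tens n g * Rr)) + complex_of_real s * mtrace (pauli_mat P * ((tens n g * pauli_mat Qm) * Rr))"
    unfolding x by (simp add: mprod_list_Cons fm_def Rr_def[symmetric]) (rule key_decomp, use Plen Qlen Rr pauli_mat_carrier[of Qm] in auto)
  define g' where "g' = (\<lambda>q. comp2 (g q) (pauli1 (Qm!q)))"
  have TQ: "tens n g * pauli_mat Qm = tens n g'" unfolding g'_def pauli_tens Qlen tens_mult ..
  have IH1: "cmod (mtrace (pauli_mat P * (tens n g * Rr))) \<le> 2^n * bnd (map (bl (supp P)) fs) m"
    using Cons.IH[OF fs Cons(3) Cons(4) Cons(5)] unfolding Rr_def .
  define m' where "m' = (if t then m - 1 else m)"
  have g'rs: "\<forall>q<n. rs (g' q)" using Cons(3) by (simp add: g'_def rs_comp2 rs_pauli)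
  have g'id: "\<forall>q\<in>supp P - (C \<union> supp Qm). \<forall>a<2. \<forall>b<2. g' q a b = id2 a b"
  proof (intro ballI allI impI)
    fix q a b :: nat assume q: "q \<in> supp P - (C \<union> supp Qm)" and a: "a < 2" and b: "b < 2"
    have "q < n" using q Plen by (auto simp: supp_def)
    hence "Qm!q = PI" using q Qlen by (auto simp: supp_def)
    hence "g' q a b = g q a b" using b by (simp add: g'_def pauli1_PI comp2_id_right)
    thus "g' q a b = id2 a b" using Cons(4) q a b by auto
  qed
  have sub: "supp P - C \<subseteq> (supp P - (C \<union> supp Qm)) \<union> (supp Qm \<inter> supp P)" by auto
  have "card (supp P - C) \<le> card ((supp P - (C \<union> supp Qm)) \<union> (supp Qm \<inter> supp P))"
    by (rule card_mono[OF _ sub]) auto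
  also have "\<dots> \<le> card (supp P - (C \<union> supp Qm)) + card (supp Qm \<inter> supp P)" by (rule card_Un_le)
  finally have c1: "card (supp P - C) \<le> card (supp P - (C \<union> supp Qm)) + card (supp Qm \<inter> supp P)" .
  have c2: "card (supp Qm \<inter> supp P) \<le> k" using Qk by (meson card_mono inf_le1 supp_finite order_trans)
  have m'cond: "m' * k < card (supp P - (C \<union> supp Qm)) + k"
  proof (cases t)
    case True
    show ?thesis
    proof (cases "m = 0")
      case True then show ?thesis using kpos by (simp add: m'_def)
    next
      case False
      have "m' * k + k = m * k" using False True by (simp add: m'_def) (metis Suc_pred mult_Suc add.commute)
      then show ?thesis using Cons(5) c1 c2 by linarith
    qed
  next
    case False
    hence "supp P - (C \<union> supp Qm) = supp P - C" unfolding t_def by auto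
    then show ?thesis using Cons(5) False by (simp add: m'_def)
  qed
  have IH2: "cmod (mtrace (pauli_mat P * ((tens n g * pauli_mat Qm) * Rr))) \<le> 2^n * bnd (map (bl (supp P)) fs) m'"
    using Cons.IH[OF fs g'rs g'id m'cond] unfolding Rr_def TQ .
  have "cmod (mtrace (pauli_mat P * (tens n g * mprod_list (2^n) (map (fm n) (x # fs)))))
     \<le> \<bar>c\<bar> * cmod (mtrace (pauli_mat P * (tens n g * Rr))) + \<bar>s\<bar> * cmod (mtrace (pauli_mat P * ((tens n g * pauli_mat Qm) * Rr)))"
    unfolding eq by (rule order_trans[OF norm_triangle_ineq]) (simp add: norm_mult)
  also have "\<dots> \<le> \<bar>c\<bar> * (2^n * bnd (map (bl (supp P)) fs) m) + \<bar>s\<bar> * (2^n * bnd (map (bl (supp P)) fs) m')"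
    by (intro add_mono mult_left_mono IH1 IH2) auto
  also have "\<dots> = 2^n * bnd (map (bl (supp P)) (x # fs)) m"
    by (simp add: x bl_def m'_def t_def algebra_simps Int_commute)
  finally show ?case .
qed


lemma mm: "(b::real) \<le> T \<Longrightarrow> 0 \<le> T \<Longrightarrow> 0 \<le> c \<Longrightarrow> c \<le> E \<Longrightarrow> c * b \<le> E * T"
  by (meson mult_left_mono mult_right_mono order_trans)

lemma bnd_bound:
  assumes "\<forall>x\<in>set bs. case x of (c,s,t) \<Rightarrow> 0 \<le> c \<and> 0 \<le> s \<and> s \<le> S0 \<and> c + s \<le> E"
    and E1: "1 \<le> E" and S0: "0 \<le> S0"
  shows "bnd bs m \<le> real (length (filter (\<lambda>(c,s,t). t) bs) choose m) * S0^m * E^(length bs)"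
  using assms(1)
proof (induction bs arbitrary: m)
  case Nil then show ?case using S0 by simp
next
  case (Cons x bs)
  obtain c s t where x: "x = (c,s,t)" by (cases x)
  have cs: "0 \<le> c" "0 \<le> s" "s \<le> S0" "c + s \<le> E" using Cons.prems x by auto
  have IH: "\<And>m. bnd bs m \<le> real (length (filter (\<lambda>(c,s,t). t) bs) choose m) * S0^m * E^(length bs)"
    using Cons by auto
  define N where "N = length (filter (\<lambda>(c,s,t). t) bs)"
  define L where "L = length bs"
  have E0: "0 \<le> E" using E1 by simp
  have Tnn: "0 \<le> real (N choose m') * S0^m' * E^L" for m' using S0 E0 by simp
  show ?case
  proof (cases t)
    case False
    have "bnd (x # bs) m = (c + s) * bnd bs m" using False by (simp add: x algebra_simps)
    also have "\<dots> \<le> E * (real (N choose m) * S0^m * E^L)"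
      by (rule mm[OF _ _ _ cs(4)]) (use IH Tnn cs in \<open>auto simp: N_def L_def\<close>)
    finally show ?thesis using False by (simp add: x N_def L_def algebra_simps)
  next
    case True
    show ?thesis
    proof (cases m)
      case 0
      have "bnd (x # bs) m = (c + s) * bnd bs 0" using True 0 by (simp add: x algebra_simps)
      also have "\<dots> \<le> E * (real (N choose 0) * S0^0 * E^L)"
        by (rule mm[OF _ _ _ cs(4)]) (use IH[of 0] Tnn[of 0] cs in \<open>auto simp: N_def L_def\<close>)
      finally show ?thesis using True 0 by (simp add: x N_def L_def algebra_simps)
    next
      case (Suc m1)
      have "bnd (x # bs) m = c * bnd bs m + s * bnd bs m1" using True Suc by (simp add: x)
      also have "\<dots> \<le> E * (real (N choose m) * S0^m * E^L) + S0 * (real (N choose m1) * S0^m1 * E^L)"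
        by (intro add_mono mm) (use IH Tnn cs in \<open>auto simp: N_def L_def\<close>)
      also have "\<dots> \<le> E * (real (N choose m) * S0^m * E^L) + E * (S0 * (real (N choose m1) * S0^m1 * E^L))"
      proof -
        have "0 \<le> S0 * (real (N choose m1) * S0^m1 * E^L)" using S0 Tnn[of m1] by simp
        from mult_right_mono[OF E1 this] show ?thesis by simp
      qed
      also have "\<dots> = real (Suc N choose m) * S0^m * E^(Suc L)"
        by (simp add: Suc algebra_simps)
      finally show ?thesis using True by (simp add: x N_def L_def)
    qed
  qed
qed

lemma choose_fact: "real (N choose r) * fact r \<le> real N ^ r"
proof (cases "r \<le> N")
  case True
  have "fact r * fact (N - r) * (N choose r) = fact N" by (rule binomial_fact_lemma[OF True])
  hence "fact N = ((N choose r) * fact r) * fact (N - r)" by (simp add: ac_simps)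
  hence "(N choose r) * fact r = fact N div fact (N - r)" by simp
  also have "\<dots> \<le> N ^ r" by (rule fact_div_fact_le_pow[OF True])
  finally have "(N choose r) * fact r \<le> N ^ r" .
  hence "real ((N choose r) * fact r) \<le> real (N ^ r)" by (rule of_nat_mono)
  thus ?thesis by simp
next
  case False then show ?thesis by (simp add: binomial_eq_0)
qed

lemma pow_fact_exp: "(x::real) \<ge> 0 \<Longrightarrow> x ^ r / fact r \<le> exp x"
proof -
  assume x: "x \<ge> 0"
  have sm: "(\<lambda>n. x^n / fact n) sums exp x" using exp_converges[of x] by (simp add: divide_inverse mult.commute)
  have "x^r / fact r = sum (\<lambda>n. x^n / fact n) {r}" by simp
  also have "\<dots> \<le> suminf (\<lambda>n. x^n / fact n)"
    by (rule sum_le_suminf) (use sm x in \<open>auto simp: sums_iff\<close>)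
  also have "\<dots> = exp x" using sm by (simp add: sums_iff)
  finally show ?thesis .
qed

lemma sinh_le: "(d::real) \<ge> 0 \<Longrightarrow> sinh d \<le> d * exp d"
proof -
  assume d: "d \<ge> 0"
  have "1 - 2 * d \<le> exp (- (2 * d))" using exp_ge_add_one_self[of "-(2*d)"] by simp
  also have "exp (-(2*d)) = exp (-d) / exp d" by (simp add: exp_minus exp_add[symmetric] field_simps mult_exp_exp)
  finally have "1 - 2 * d \<le> exp (-d) / exp d" .
  hence "exp d * (1 - 2 * d) \<le> exp (-d)" by (simp add: field_simps)
  thus ?thesis by (simp add: sinh_def algebra_simps)
qed


lemma final_ineq:
  fixes N r L p B M :: nat and \<delta> :: real
  assumes r: "r \<ge> 1" and N: "N \<le> 2*(p+1)*B" and L: "L \<le> 2*(p+1)*M" and d: "\<delta> > 0"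
  shows "real (N choose r) * sinh \<delta> ^ r * exp \<delta> ^ L
     \<le> (2 * exp 1 * ((real p + 1) * \<delta>) * real B * exp \<delta> / real r) ^ r * exp (2 * ((real p + 1) * \<delta>) * real M)"
proof -
  have fr: "(0::real) < fact r" by simp
  have rpos: "(0::real) < real r" using r by simp
  have h1a: "real (N choose r) \<le> real N ^ r / fact r"
    using choose_fact[of N r] fr by (simp add: field_simps)
  have "real r ^ r / fact r \<le> exp (real r)" by (rule pow_fact_exp) simp
  also have "exp (real r) = exp 1 ^ r" using exp_of_nat_mult[of r 1] by simp
  finally have "real r ^ r / fact r \<le> exp 1 ^ r" .
  hence "1 / fact r \<le> exp 1 ^ r / real r ^ r" using rpos fr by (simp add: field_simps)
  hence "real N ^ r * (1 / fact r) \<le> real N ^ r * (exp 1 ^ r / real r ^ r)" by (intro mult_left_mono) auto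
  moreover have "(exp 1 * real N / real r) ^ r = real N ^ r * (exp 1 ^ r / real r ^ r)"
    by (simp add: power_divide power_mult_distrib)
  moreover have "real N ^ r / fact r = real N ^ r * (1 / fact r)" by simp
  ultimately have h1: "real (N choose r) \<le> (exp 1 * real N / real r) ^ r" using h1a by linarith
  have s0: "0 \<le> sinh \<delta>" using d by (simp add: sinh_def)
  have h2: "sinh \<delta> ^ r \<le> (\<delta> * exp \<delta>) ^ r" by (rule power_mono[OF sinh_le s0]) (use d in auto)
  have Lr: "real L \<le> 2 * (real p + 1) * real M"
  proof -
    have "real L \<le> real (2*(p+1)*M)" using L by (rule of_nat_mono)
    thus ?thesis by (simp add: algebra_simps)
  qed
  have "exp \<delta> ^ L = exp (real L * \<delta>)" using exp_of_nat_mult[of L \<delta>] by simp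
  also have "\<dots> \<le> exp (2 * ((real p + 1) * \<delta>) * real M)"
  proof -
    have "real L * \<delta> \<le> (2 * (real p + 1) * real M) * \<delta>" using d Lr by (intro mult_right_mono) auto
    also have "\<dots> = 2 * ((real p + 1) * \<delta>) * real M" by (simp only: mult_ac)
    finally show ?thesis by simp
  qed
  finally have h3: "exp \<delta> ^ L \<le> exp (2 * ((real p + 1) * \<delta>) * real M)" .
  have "real (N choose r) * sinh \<delta> ^ r \<le> (exp 1 * real N / real r) ^ r * (\<delta> * exp \<delta>) ^ r"
    by (rule mult_mono[OF h1 h2]) (use s0 in auto)
  also have "(exp 1 * real N / real r) ^ r * (\<delta> * exp \<delta>) ^ r = (exp 1 * real N / real r * (\<delta> * exp \<delta>)) ^ r"
    by (rule power_mult_distrib[symmetric])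
  also have "\<dots> \<le> (2 * exp 1 * ((real p + 1) * \<delta>) * real B * exp \<delta> / real r) ^ r"
  proof (rule power_mono)
    have Nr: "real N \<le> 2 * (real p + 1) * real B"
    proof -
      have "real N \<le> real (2*(p+1)*B)" using N by (rule of_nat_mono)
      thus ?thesis by (simp add: algebra_simps)
    qed
    have "exp 1 * real N * (\<delta> * exp \<delta>) \<le> exp 1 * (2 * (real p + 1) * real B) * (\<delta> * exp \<delta>)"
      using d Nr by (intro mult_right_mono mult_left_mono) auto
    have "exp 1 * real N / real r * (\<delta> * exp \<delta>) = exp 1 * real N * (\<delta> * exp \<delta>) / real r" by simp
    also have "\<dots> \<le> exp 1 * (2 * (real p + 1) * real B) * (\<delta> * exp \<delta>) / real r"
      using rpos \<open>exp 1 * real N * (\<delta> * exp \<delta>) \<le> _\<close> by (intro divide_right_mono) auto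
    also have "\<dots> = 2 * exp 1 * ((real p + 1) * \<delta>) * real B * exp \<delta> / real r"
      by (simp only: mult_ac)
    finally show "exp 1 * real N / real r * (\<delta> * exp \<delta>) \<le> 2 * exp 1 * ((real p + 1) * \<delta>) * real B * exp \<delta> / real r" .
    show "0 \<le> exp 1 * real N / real r * (\<delta> * exp \<delta>)" using d by simp
  qed
  finally have h12: "real (N choose r) * sinh \<delta> ^ r \<le> (2 * exp 1 * ((real p + 1) * \<delta>) * real B * exp \<delta> / real r) ^ r" .
  show ?thesis by (rule mult_mono[OF h12 h3]) (use s0 d in auto)
qed


lemma mprod_list_append:
  "(\<And>A. A \<in> set xs \<Longrightarrow> A \<in> carrier_mat d d) \<Longrightarrow> (\<And>A. A \<in> set ys \<Longrightarrow> A \<in> carrier_mat d d) \<Longrightarrow>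
   mprod_list d (xs @ ys) = mprod_list d xs * mprod_list d ys"
proof (induction xs)
  case Nil
  have "mprod_list d ys \<in> carrier_mat d d" using Nil by (intro mprod_list_carrier) auto
  then show ?case by (simp add: mprod_list_Nil)
next
  case (Cons a xs)
  have a: "a \<in> carrier_mat d d" using Cons by auto
  have x: "mprod_list d xs \<in> carrier_mat d d" using Cons by (intro mprod_list_carrier) auto
  have y: "mprod_list d ys \<in> carrier_mat d d" using Cons by (intro mprod_list_carrier) auto
  have "mprod_list d ((a # xs) @ ys) = a * (mprod_list d xs * mprod_list d ys)"
    using Cons by (simp add: mprod_list_Cons)
  also have "\<dots> = (a * mprod_list d xs) * mprod_list d ys" using a x y by (simp add: assoc_mult_mat[of _ d d _ d _ d])
  finally show ?case by (simp add: mprod_list_Cons)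
qed

lemma mprod_pow:
  assumes "\<And>A. A \<in> set xs \<Longrightarrow> A \<in> carrier_mat d d"
  shows "mprod_list d xs ^\<^sub>m p = mprod_list d (concat (replicate p xs))"
proof (induction p)
  case 0
  have "mprod_list d xs \<in> carrier_mat d d" using assms by (intro mprod_list_carrier) auto
  then show ?case by (simp add: mprod_list_Nil)
next
  case (Suc p)
  have "mprod_list d xs ^\<^sub>m Suc p = mprod_list d (concat (replicate p xs)) * mprod_list d xs"
    using Suc by simp
  also have "\<dots> = mprod_list d (concat (replicate p xs) @ xs)"
    by (rule mprod_list_append[symmetric]) (use assms in auto)
  also have "concat (replicate p xs) @ xs = concat (replicate (Suc p) xs)"
    by (induction p) auto
  finally show ?case .
qed

lemma length_filter_concat_rep: "length (filter f (concat (replicate p xs))) = p * length (filter f xs)"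
  by (induction p) auto

lemma ceil_bound:
  fixes w k :: nat assumes k: "k \<ge> 1"
  shows "nat \<lceil>real w / real k\<rceil> * k < w + k"
proof -
  define r where "r = nat \<lceil>real w / real k\<rceil>"
  have "(0::real) \<le> of_int \<lceil>real w / real k\<rceil>" using le_of_int_ceiling[of "real w / real k"] by (smt (verit) divide_nonneg_nonneg of_nat_0_le_iff)
  hence c0: "\<lceil>real w / real k\<rceil> \<ge> 0" by simp
  have "\<not> (\<lceil>real w / real k\<rceil> \<le> \<lceil>real w / real k\<rceil> - 1)" by simp
  hence "\<not> (real w / real k \<le> of_int (\<lceil>real w / real k\<rceil> - 1))" using ceiling_le_iff by blast
  hence x1: "of_int \<lceil>real w / real k\<rceil> - 1 < real w / real k" by simp
  have "real r = of_int \<lceil>real w / real k\<rceil>" using c0 unfolding r_def by simp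
  hence "real r - 1 < real w / real k" using x1 by linarith
  hence "(real r - 1) * real k < real w" using k by (simp add: field_simps)
  hence "real (r * k) < real (w + k)" by (simp add: algebra_simps)
  thus ?thesis unfolding r_def by (rule of_nat_less_imp_less)
qed

lemma ceil_pos:
  fixes w k :: nat assumes k: "k \<ge> 1" and w: "w \<ge> 1"
  shows "nat \<lceil>real w / real k\<rceil> \<ge> 1"
proof -
  have "real w / real k > 0" using k w by simp
  hence "(0::real) < of_int \<lceil>real w / real k\<rceil>" using le_of_int_ceiling[of "real w / real k"] by linarith
  hence "\<lceil>real w / real k\<rceil> \<ge> 1" by simp
  thus ?thesis by linarith
qed


lemma length_concat_rep: "length (concat (replicate p xs)) = p * length xs"
  by (induction p) auto

theorem mainTheorem14:
  fixes n k M p j :: nat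
    and lam :: "nat \<Rightarrow> real"
    and Q :: "nat \<Rightarrow> pauli list"
    and P :: "pauli list"
    and \<delta> :: real
    and G :: "nat \<Rightarrow> complex mat"
    and X :: "complex mat"
  assumes Q_len: "\<And>m. m \<in> {1..M} \<Longrightarrow> length (Q m) = n"
    and lam_bd: "\<And>m. m \<in> {1..M} \<Longrightarrow> \<bar>lam m\<bar> \<le> 1"
    and Q_loc: "\<And>m. m \<in> {1..M} \<Longrightarrow> card (supp (Q m)) \<le> k"
    and k_pos: "k \<ge> 1"
    and delta_pos: "\<delta> > 0"
    and G_def: "\<And>m. G m = mexp (complex_of_real (\<delta> * lam m) \<cdot>\<^sub>m pauli_mat (Q m))"
    and j_lt: "j < M"
    and X_def: "X = mprod_list (2 ^ n) (rev (map G [1..<j+1]))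
                  * (mprod_list (2 ^ n) (rev (map G [1..<M+1])) ^\<^sub>m p)
                  * (mprod_list (2 ^ n) (map G [1..<M+1]) ^\<^sub>m p)
                  * mprod_list (2 ^ n) (map G [1..<j+1])"
    and P_len: "length P = n"
    and P_nontriv: "supp P \<noteq> {}"
  shows "cmod (mtrace (pauli_mat P * X)) / 2 ^ n
         \<le> (let w = card (supp P);
                r = nat \<lceil>real w / real k\<rceil>;
                B = card {m \<in> {1..M}. supp (Q m) \<inter> supp P \<noteq> {}};
                \<beta> = (real p + 1) * \<delta>
            in (2 * exp 1 * \<beta> * real B * exp \<delta> / real r) ^ r * exp (2 * \<beta> * real M))"
proof -
  define d where "d = (2::nat)^n"
  define w where "w = card (supp P)"
  define r where "r = nat \<lceil>real w / real k\<rceil>"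
  define B where "B = card {m \<in> {1..M}. supp (Q m) \<inter> supp P \<noteq> {}}"
  define tt where "tt = (\<lambda>m. supp (Q m) \<inter> supp P \<noteq> {})"
  define trip where "trip = (\<lambda>m. (cosh (\<delta> * lam m), sinh (\<delta> * lam m), Q m))"
  define ms where "ms = rev [1..<j+1] @ concat (replicate p (rev [1..<M+1])) @ concat (replicate p [1..<M+1]) @ [1..<j+1]"
  have ms_set: "set ms \<subseteq> {1..M}" using j_lt by (auto simp: ms_def)
  have Gfm: "G m = fm n (trip m)" if m: "m \<in> {1..M}" for m
  proof -
    have "G m = mexp (complex_of_real (\<delta> * lam m) \<cdot>\<^sub>m pauli_mat (Q m))" by (rule G_def)
    also have "\<dots> = complex_of_real (cosh (\<delta> * lam m)) \<cdot>\<^sub>m 1\<^sub>m (2 ^ length (Q m)) + complex_of_real (sinh (\<delta> * lam m)) \<cdot>\<^sub>m pauli_mat (Q m)"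
      by (rule mexp_invol[OF pauli_mat_carrier pauli_mat_sq])
    finally show ?thesis using Q_len[OF m] by (simp add: fm_def trip_def)
  qed
  have Gcar: "G m \<in> carrier_mat d d" if m: "m \<in> {1..M}" for m
    using Q_len[OF m] pauli_mat_carrier[of "Q m"] by (simp add: Gfm[OF m] fm_def trip_def d_def)
  define la where "la = rev (map G [1..<j+1])"
  define lb where "lb = rev (map G [1..<M+1])"
  define lc where "lc = map G [1..<M+1]"
  define le where "le = map G [1..<j+1]"
  have cla: "\<And>A. A \<in> set la \<Longrightarrow> A \<in> carrier_mat d d" using Gcar j_lt by (auto simp: la_def)
  have clb: "\<And>A. A \<in> set lb \<Longrightarrow> A \<in> carrier_mat d d" using Gcar by (auto simp: lb_def)
  have clc: "\<And>A. A \<in> set lc \<Longrightarrow> A \<in> carrier_mat d d" using Gcar by (auto simp: lc_def)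
  have cle: "\<And>A. A \<in> set le \<Longrightarrow> A \<in> carrier_mat d d" using Gcar j_lt by (auto simp: le_def)
  have clb': "\<And>A. A \<in> set (concat (replicate p lb)) \<Longrightarrow> A \<in> carrier_mat d d" using clb by auto
  have clc': "\<And>A. A \<in> set (concat (replicate p lc)) \<Longrightarrow> A \<in> carrier_mat d d" using clc by auto
  have ma: "mprod_list d la \<in> carrier_mat d d" using cla by (rule mprod_list_carrier)
  have mb: "mprod_list d (concat (replicate p lb)) \<in> carrier_mat d d" using clb' by (rule mprod_list_carrier)
  have mc: "mprod_list d (concat (replicate p lc)) \<in> carrier_mat d d" using clc' by (rule mprod_list_carrier)
  have me: "mprod_list d le \<in> carrier_mat d d" using cle by (rule mprod_list_carrier)
  have "X = mprod_list d la * mprod_list d lb ^\<^sub>m p * mprod_list d lc ^\<^sub>m p * mprod_list d le"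
    by (simp add: X_def la_def lb_def lc_def le_def d_def)
  also have "\<dots> = mprod_list d la * mprod_list d (concat (replicate p lb)) * mprod_list d (concat (replicate p lc)) * mprod_list d le"
    by (simp only: mprod_pow[OF clb] mprod_pow[OF clc])
  also have "\<dots> = mprod_list d la * (mprod_list d (concat (replicate p lb)) * (mprod_list d (concat (replicate p lc)) * mprod_list d le))"
    using ma mb mc me by (simp add: assoc_mult_mat[of _ d d _ d _ d])
  also have "\<dots> = mprod_list d (la @ concat (replicate p lb) @ concat (replicate p lc) @ le)"
  proof -
    have e1: "mprod_list d (concat (replicate p lc) @ le) = mprod_list d (concat (replicate p lc)) * mprod_list d le"
      by (rule mprod_list_append) (use clc' cle in auto)
    have e2: "mprod_list d (concat (replicate p lb) @ concat (replicate p lc) @ le) = mprod_list d (concat (replicate p lb)) * mprod_list d (concat (replicate p lc) @ le)"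
      by (rule mprod_list_append) (use clb' clc' cle in auto)
    have e3: "mprod_list d (la @ concat (replicate p lb) @ concat (replicate p lc) @ le) = mprod_list d la * mprod_list d (concat (replicate p lb) @ concat (replicate p lc) @ le)"
      by (rule mprod_list_append) (use cla clb' clc' cle in auto)
    show ?thesis unfolding e3 e2 e1 ..
  qed
  also have "la @ concat (replicate p lb) @ concat (replicate p lc) @ le = map G ms"
    by (simp add: ms_def la_def lb_def lc_def le_def rev_map map_concat)
  also have "map G ms = map (fm n) (map trip ms)"
    using ms_set Gfm by auto
  finally have X_eq: "X = mprod_list d (map (fm n) (map trip ms))" .
  define fs where "fs = map trip ms"
  have fs_ok: "\<forall>x\<in>set fs. case x of (c,s,Qm) \<Rightarrow> length Qm = n \<and> card (supp Qm) \<le> k"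
    using ms_set Q_len Q_loc by (auto simp: fs_def trip_def)
  have "finite (supp P)" by simp
  hence wpos: "w \<ge> 1" using P_nontriv unfolding w_def by (simp add: Suc_le_eq card_gt_0_iff)
  have rpos: "r \<ge> 1" unfolding r_def by (rule ceil_pos[OF k_pos wpos])
  have rk: "r * k < card (supp P - {}) + k" using ceil_bound[OF k_pos, of w] by (simp add: r_def w_def)
  have Xc: "X \<in> carrier_mat d d" unfolding X_eq
  proof (rule mprod_list_carrier)
    fix A assume "A \<in> set (map (fm n) (map trip ms))"
    then obtain m where m: "m \<in> set ms" and A: "A = fm n (trip m)" by auto
    have m': "m \<in> {1..M}" using m ms_set by auto
    show "A \<in> carrier_mat d d" using Gcar[OF m'] Gfm[OF m'] A by simp
  qed
  have one: "tens n (\<lambda>q. id2) * X = X" using Xc by (simp add: one_tens[symmetric] d_def)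
  have "cmod (mtrace (pauli_mat P * (tens n (\<lambda>q. id2) * mprod_list (2^n) (map (fm n) fs)))) \<le> 2^n * bnd (map (bl (supp P)) fs) r"
    by (rule main_ind[OF P_len k_pos fs_ok, where C="{}"]) (use rs_id2 rk in auto)
  hence bound1: "cmod (mtrace (pauli_mat P * X)) \<le> 2^n * bnd (map (bl (supp P)) fs) r"
    using one X_eq by (simp add: fs_def d_def)
  have bl_ok: "\<forall>x\<in>set (map (bl (supp P)) fs). case x of (c,s,t) \<Rightarrow> 0 \<le> c \<and> 0 \<le> s \<and> s \<le> sinh \<delta> \<and> c + s \<le> exp \<delta>"
  proof
    fix x assume "x \<in> set (map (bl (supp P)) fs)"
    then obtain m where m: "m \<in> set ms" and x: "x = bl (supp P) (trip m)" by (auto simp: fs_def)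
    have m': "m \<in> {1..M}" using m ms_set by auto
    define y where "y = \<delta> * lam m"
    have "\<bar>y\<bar> = \<delta> * \<bar>lam m\<bar>" using delta_pos by (simp add: y_def abs_mult)
    also have "\<dots> \<le> \<delta> * 1" using lam_bd[OF m'] delta_pos by (intro mult_left_mono) auto
    finally have ya: "\<bar>y\<bar> \<le> \<delta>" by simp
    have c1: "\<bar>cosh y\<bar> = cosh \<bar>y\<bar>" by simp
    have s1: "\<bar>sinh y\<bar> = sinh \<bar>y\<bar>" by simp
    have s2: "sinh \<bar>y\<bar> \<le> sinh \<delta>" using ya strict_mono_less_eq[OF sinh_real_strict_mono] by blast
    have e1: "cosh \<bar>y\<bar> + sinh \<bar>y\<bar> \<le> exp \<delta>" using ya cosh_plus_sinh[of "\<bar>y\<bar>"] by simp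
    show "case x of (c,s,t) \<Rightarrow> 0 \<le> c \<and> 0 \<le> s \<and> s \<le> sinh \<delta> \<and> c + s \<le> exp \<delta>"
      unfolding x bl_def trip_def y_def[symmetric] using c1 s1 s2 e1 by simp
  qed
  have E1: "1 \<le> exp \<delta>" using delta_pos by simp
  have S0: "0 \<le> sinh \<delta>" using delta_pos by simp
  define Nt where "Nt = length (filter (\<lambda>(c,s,t). t) (map (bl (supp P)) fs))"
  have bound2: "bnd (map (bl (supp P)) fs) r \<le> real (Nt choose r) * sinh \<delta> ^ r * exp \<delta> ^ length ms"
    using bnd_bound[OF bl_ok E1 S0, of r] by (simp add: Nt_def fs_def)
  have "Nt = length (filter tt ms)"
    unfolding Nt_def fs_def by (simp add: filter_map o_def bl_def trip_def tt_def)
  also have "\<dots> = 2 * length (filter tt [1..<j+1]) + 2 * p * length (filter tt [1..<M+1])"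
    by (simp add: ms_def rev_filter[symmetric] length_filter_concat_rep)
  finally have Nt_eq: "Nt = 2 * length (filter tt [1..<j+1]) + 2 * p * length (filter tt [1..<M+1])" .
  have lfM: "length (filter tt [1..<M+1]) = B"
  proof -
    have "length (filter tt [1..<M+1]) = card ({x. tt x} \<inter> set [1..<M+1])" by (rule distinct_length_filter) simp
    also have "{x. tt x} \<inter> set [1..<M+1] = {m \<in> {1..M}. supp (Q m) \<inter> supp P \<noteq> {}}" by (auto simp: tt_def)
    finally show ?thesis by (simp add: B_def)
  qed
  have lfj: "length (filter tt [1..<j+1]) \<le> B"
  proof -
    have "length (filter tt [1..<j+1]) = card ({x. tt x} \<inter> set [1..<j+1])" by (rule distinct_length_filter) simp
    also have "\<dots> \<le> card ({x. tt x} \<inter> set [1..<M+1])" using j_lt by (intro card_mono) auto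
    also have "\<dots> = B" using lfM distinct_length_filter[of "[1..<M+1]" tt] by simp
    finally show ?thesis .
  qed
  have Nt_le: "Nt \<le> 2 * (p + 1) * B" using Nt_eq lfM lfj by (simp add: algebra_simps)
  have L_le: "length ms \<le> 2 * (p + 1) * M" using j_lt by (simp add: ms_def length_concat_rep algebra_simps)
  have fin: "real (Nt choose r) * sinh \<delta> ^ r * exp \<delta> ^ length ms
     \<le> (2 * exp 1 * ((real p + 1) * \<delta>) * real B * exp \<delta> / real r) ^ r * exp (2 * ((real p + 1) * \<delta>) * real M)"
    by (rule final_ineq[OF rpos Nt_le L_le delta_pos])
  have "cmod (mtrace (pauli_mat P * X)) / 2 ^ n \<le> bnd (map (bl (supp P)) fs) r"
    using bound1 by (simp add: field_simps)
  also have "\<dots> \<le> (2 * exp 1 * ((real p + 1) * \<delta>) * real B * exp \<delta> / real r) ^ r * exp (2 * ((real p + 1) * \<delta>) * real M)"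
    using bound2 fin by linarith
  finally show ?thesis unfolding Let_def r_def w_def B_def .
qed

end
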